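(* Let $p\in(1,2]$ and let ${\bm{W}}_1,\dots,{\bm{W}}_T\in\mathbb{R}^{m\times n}$ ($T\ge1$) be random matrices with $\mathbb E\|{\bm{W}}_t\|_F^p<\infty$ forming a martingale difference sequence with respect to the natural filtration $\mathcal F_t=\sigma({\bm{W}}_1,\dots,{\bm{W}}_t)$ ($\mathcal F_0$ trivial), i.e. $\mathbb E[{\bm{W}}_t\mid\mathcal F_{t-1}]=\mathbf 0$. Then $$\mathbb E\Big\|\sum_{t=1}^T{\bm{W}}_t\Big\|_F\le 2\sqrt\pi\;\mathbb E\Big[\Big(\sum_{t=1}^T\|{\bm{W}}_t\|_F^p\Big)^{1/p}\Big].$$
   Context: $\|\cdot\|_F$ is the Frobenius norm. *)

theory Defs
  imports "HOL-Analysis.Analysis" "HOL-Probability.Probability"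
begin

text \<open>Frobenius norm of an m x n real matrix (rows indexed by 'm, columns by 'n).\<close>
definition frob_norm :: "real ^ 'n ^ 'm \<Rightarrow> real" where
  "frob_norm A = sqrt (\<Sum>i\<in>UNIV. \<Sum>j\<in>UNIV. (A $ i $ j)\<^sup>2)"

text \<open>Natural filtration: the sigma-algebra generated by W 1, ..., W k on the
  sample space of M (for k = 0 it is the trivial sigma-algebra).\<close>
definition nat_filtration ::
  "'a measure \<Rightarrow> (nat \<Rightarrow> 'a \<Rightarrow> 'b::topological_space) \<Rightarrow> nat \<Rightarrow> 'a measure" where
  "nat_filtration M W k =
     sigma (space M) (\<Union>s\<in>{1..k}. {W s -` A \<inter> space M | A. A \<in> sets borel})"

end

theory Submission
  imports Defs
begin


lemma frob_norm_eq: "frob_norm A = norm A"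
  unfolding frob_norm_def norm_vec_def L2_set_def
  by (simp add: sum_nonneg)

lemma lp_mono:
  fixes a :: "nat \<Rightarrow> real"
  assumes fin: "finite A" and nn: "\<And>i. i \<in> A \<Longrightarrow> 0 \<le> a i" and p: "0 < p" and pq: "p \<le> q"
  shows "(\<Sum>i\<in>A. a i powr q) powr (1/q) \<le> (\<Sum>i\<in>A. a i powr p) powr (1/p)"
proof -
  define N where "N = (\<Sum>i\<in>A. a i powr p) powr (1/p)"
  have q: "0 < q" using p pq by simp
  have N0: "0 \<le> N" unfolding N_def by simp
  have aN: "a i \<le> N" if i: "i \<in> A" for i
  proof -
    have "a i powr p \<le> (\<Sum>i\<in>A. a i powr p)"
      using i fin by (intro member_le_sum) auto
    then have "(a i powr p) powr (1/p) \<le> (\<Sum>i\<in>A. a i powr p) powr (1/p)"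
      using p by (intro powr_mono2) auto
    then show ?thesis unfolding N_def using p nn[OF i] by (simp add: powr_powr)
  qed
  show ?thesis
  proof (cases "N = 0")
    case True
    then have "\<And>i. i \<in> A \<Longrightarrow> a i = 0" using aN nn by (metis order_antisym)
    then show ?thesis using True unfolding N_def by simp
  next
    case False
    then have Np: "0 < N" using N0 by simp
    have sp: "(\<Sum>i\<in>A. a i powr p) = N powr p"
      unfolding N_def using p by (simp add: powr_powr sum_nonneg)
    have "(\<Sum>i\<in>A. (a i / N) powr q) \<le> (\<Sum>i\<in>A. (a i / N) powr p)"
    proof (rule sum_mono)
      fix i assume i: "i \<in> A"
      show "(a i / N) powr q \<le> (a i / N) powr p"
        using pq nn[OF i] aN[OF i] Np by (intro powr_mono') (auto simp: divide_le_eq)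
    qed
    also have "\<dots> = (\<Sum>i\<in>A. a i powr p) / N powr p"
      by (simp add: powr_divide sum_divide_distrib)
    also have "\<dots> = 1" using sp Np by simp
    finally have "(\<Sum>i\<in>A. a i powr q) / N powr q \<le> 1"
      by (simp add: powr_divide sum_divide_distrib)
    then have "(\<Sum>i\<in>A. a i powr q) \<le> N powr q" using Np by (simp add: divide_le_eq)
    then have "(\<Sum>i\<in>A. a i powr q) powr (1/q) \<le> (N powr q) powr (1/q)"
      using q by (intro powr_mono2) (auto intro: sum_nonneg)
    also have "\<dots> = N" using q N0 by (simp add: powr_powr)
    finally show ?thesis unfolding N_def .
  qed
qed

lemma pi_ge_3: "3 \<le> pi"
proof -
  have "sin (pi/6) \<le> pi/6" by (rule sin_x_le_x) simp
  then show ?thesis by (simp add: sin_30)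
qed

lemma const_le: "69/20 \<le> 2 * sqrt pi"
proof -
  have "69/20 \<le> sqrt (4 * pi)"
    using pi_ge_3 by (intro real_le_rsqrt) (simp add: power2_eq_square)
  also have "\<dots> = 2 * sqrt pi" by (simp add: real_sqrt_mult)
  finally show ?thesis .
qed

lemma lin_aux: "(l1::real) \<le> r1 + q1 + c1*(s1-y1) \<Longrightarrow> l1 - c1* s1 \<le> r1 - c1*y1 + q1"
  by (simp add: right_diff_distrib)

lemma scalar_step:
  fixes X y d ip :: real
  assumes X: "0 \<le> X" and y: "0 \<le> y" and d: "0 \<le> d" and ip: "\<bar>ip\<bar> \<le> X*d" and pos: "0 < X^2 + y^2"
  shows "sqrt ((y^2+d^2) + (X^2 + 2*ip + d^2)) - 69/20 * sqrt (y^2+d^2)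
         \<le> sqrt (y^2+X^2) - 69/20*y + ip / sqrt (y^2+X^2)"
proof -
  define s where "s = sqrt (y^2+d^2)"
  define R where "R = sqrt (y^2+X^2)"
  define e where "e = s - y"
  have s2: "s^2 = y^2+d^2" unfolding s_def by simp
  have R2: "R^2 = y^2+X^2" unfolding R_def by simp
  have Rpos: "0 < R" unfolding R_def using pos by (simp add: add.commute)
  have sy: "y \<le> s" unfolding s_def by (rule real_le_rsqrt) simp
  have sd: "d \<le> s" unfolding s_def by (rule real_le_rsqrt) simp
  have Ry: "y \<le> R" unfolding R_def by (rule real_le_rsqrt) simp
  have RX: "X \<le> R" unfolding R_def by (rule real_le_rsqrt) simp
  have e0: "0 \<le> e" using sy e_def by simp
  have d2: "d^2 = e * (s + y)" using s2 unfolding e_def by (simp add: power2_eq_square algebra_simps)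
  have ipR: "(- ip) / R \<le> d"
  proof -
    have "- ip \<le> X * d" using ip by linarith
    also have "\<dots> \<le> R * d" using RX d by (simp add: mult_right_mono)
    finally show ?thesis using Rpos by (subst pos_divide_le_eq[OF Rpos]) (simp add: mult.commute)
  qed
  define L where "L = sqrt ((y^2+d^2) + (X^2 + 2*ip + d^2))"
  have L2: "(y^2+d^2) + (X^2 + 2*ip + d^2) = R^2 + 2*ip + 2*d^2" using R2 by simp
  have "L \<le> R + ip / R + 69/20 * e"
  proof (cases "s \<le> 49/20 * y")
    case True
    have nn: "0 \<le> R + ip / R + d^2 / R"
    proof -
      have "R*R + ip + d^2 \<ge> 0"
      proof -
        have "ip \<ge> - (X*d)" using ip by linarith
        moreover have "X*X - X*d + d^2 \<ge> 0"
        proof -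
          have "X*X - X*d + d^2 = (X - d/2)^2 + 3/4*d^2" by (simp add: power2_eq_square algebra_simps)
          then show ?thesis by simp
        qed
        moreover have "R*R \<ge> X*X" using RX X by (simp add: mult_mono)
        ultimately show ?thesis by linarith
      qed
      then have "(R*R + ip + d^2) / R \<ge> 0" using Rpos by simp
      then show ?thesis using Rpos by (simp add: add_divide_distrib)
    qed
    have "(R + ip / R + d^2 / R)^2 = R^2 + 2*ip + 2*d^2 + (ip/R + d^2/R)^2"
      using Rpos by (simp add: power2_eq_square field_simps)
    then have "R^2 + 2*ip + 2*d^2 \<le> (R + ip / R + d^2 / R)^2" by simp
    then have L1: "L \<le> R + ip / R + d^2 / R" unfolding L_def L2
      using nn by (simp add: real_sqrt_le_iff real_le_lsqrt)
    have "d^2 \<le> 69/20 * e * R"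
    proof -
      have "s + y \<le> 69/20 * R" using True Ry by linarith
      then have "e * (s+y) \<le> e * (69/20 * R)" using e0 by (rule mult_left_mono)
      then show ?thesis using d2 by simp
    qed
    then have "d^2 / R \<le> 69/20 * e" using Rpos by (simp add: divide_le_eq)
    then show ?thesis using L1 by linarith
  next
    case False
    have h2: "d^2 + e^2 = 2 * s * e" using d2 unfolding e_def by (simp add: power2_eq_square algebra_simps)
    have cs: "ip + y*e \<le> R * sqrt (d^2 + e^2)"
    proof -
      have a: "ip + y*e \<le> X*d + y*e" using ip by linarith
      have "(X*d + y*e)^2 \<le> (X^2+y^2)*(d^2+e^2)"
      proof -
        have "(X^2+y^2)*(d^2+e^2) = (X*d + y*e)^2 + (X*e - y*d)^2" by (simp add: power2_eq_square algebra_simps)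
        then show ?thesis by simp
      qed
      then have "(X*d + y*e)^2 \<le> (R * sqrt (d^2+e^2))^2" using R2
        by (simp add: power_mult_distrib add.commute)
      then have "X*d + y*e \<le> R * sqrt (d^2+e^2)"
        by (rule power2_le_imp_le) (use Rpos in auto)
      then show ?thesis using a by linarith
    qed
    have "R^2 + 2*ip + 2*d^2 \<le> (R + sqrt (d^2 + e^2))^2"
    proof -
      have "(R + sqrt (d^2 + e^2))^2 = R^2 + 2*R* sqrt (d^2 + e^2) + (d^2+e^2)"
        by (simp add: power2_eq_square algebra_simps)
      moreover have "d^2 + e^2 + 2*y*e = 2*d^2" using d2 unfolding e_def by (simp add: power2_eq_square algebra_simps)
      ultimately show ?thesis using cs by linarith
    qed
    then have L1: "L \<le> R + sqrt (d^2 + e^2)" unfolding L_def L2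
      using Rpos by (simp add: real_le_lsqrt real_sqrt_le_iff)
    have ys: "y \<le> 20/49 * s" using False by linarith
    have c1: "sqrt (d^2+e^2) \<le> 46/25 * e"
    proof -
      have "2 * s * e \<le> (46/25 * e)^2"
      proof -
        have q: "(46/25::real)^2 = 2116/625" by (simp add: power2_eq_square)
        have "2 * s \<le> 2116/625 * e" using ys sy y unfolding e_def by (simp add: field_simps)
        then have "2 * s \<le> (46/25)^2 * e" unfolding q .
        then have "2 * s * e \<le> (46/25)^2 * e * e" using e0 by (rule mult_right_mono)
        then show ?thesis by (simp add: power2_eq_square)
      qed
      then show ?thesis unfolding h2 by (intro real_le_lsqrt) (use e0 in auto)
    qed
    have c2: "d \<le> 8/5 * e"
    proof -
      have q: "(8/5::real)^2 = 64/25" by (simp add: power2_eq_square)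
      have "s + y \<le> 64/25 * e" using ys sy y unfolding e_def by (simp add: field_simps)
      then have "s + y \<le> (8/5)^2 * e" unfolding q .
      then have "e * (s + y) \<le> e * ((8/5)^2 * e)" using e0 by (rule mult_left_mono)
      then have "d^2 \<le> (8/5 * e)^2" using d2 by (simp add: power2_eq_square)
      then show ?thesis by (rule power2_le_imp_le) (use e0 in auto)
    qed
    have "(- ip) / R = - (ip / R)" by simp
    then show ?thesis using L1 c1 c2 ipR e0 by linarith
  qed
  then have "L \<le> R + ip / R + 69/20 * (s - y)" unfolding e_def .
  then have "L - 69/20 * s \<le> R - 69/20 * y + ip / R" by (rule lin_aux)
  then show ?thesis unfolding L_def s_def R_def .
qed


definition Gf :: "'v::real_inner \<Rightarrow> real \<Rightarrow> 'v" where
  "Gf x y = x /\<^sub>R sqrt (y^2 + (norm x)^2)"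

lemma norm_Gf: "norm (Gf x y) \<le> 1"
proof -
  have "norm x \<le> sqrt (y^2 + (norm x)^2)" by (rule real_le_rsqrt) simp
  show ?thesis
  proof (cases "sqrt (y^2 + (norm x)^2) = 0")
    case True
    then show ?thesis by (simp add: Gf_def)
  next
    case False
    have "0 \<le> sqrt (y^2 + (norm x)^2)" by simp
    then have Rp: "0 < sqrt (y^2 + (norm x)^2)" using False by linarith
    have "norm (Gf x y) = norm x / sqrt (y^2 + (norm x)^2)"
      unfolding Gf_def by (simp add: divide_inverse_commute)
    then show ?thesis using Rp \<open>norm x \<le> _\<close> by (simp add: divide_le_eq)
  qed
qed

lemma vec_step:
  fixes x d :: "'v::real_inner"
  assumes y: "0 \<le> y"
  shows "sqrt ((sqrt (y^2 + (norm d)^2))^2 + (norm (x+d))^2) - 69/20 * sqrt (y^2 + (norm d)^2)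
         \<le> sqrt (y^2 + (norm x)^2) - 69/20*y + inner (Gf x y) d"
proof -
  have s2: "(sqrt (y^2 + (norm d)^2))^2 = y^2 + (norm d)^2" by simp
  have nxd: "(norm (x+d))^2 = (norm x)^2 + 2 * inner x d + (norm d)^2"
    by (simp add: power2_norm_eq_inner inner_add algebra_simps inner_commute)
  show ?thesis
  proof (cases "y^2 + (norm x)^2 = 0")
    case True
    then have y0: "y = 0" and x0: "x = 0" using y
      by (auto simp: add_nonneg_eq_0_iff)
    have "sqrt ((norm d)^2 + (norm d)^2) = sqrt (2 * (norm d)^2)" by simp
    also have "\<dots> = sqrt 2 * norm d" by (simp add: real_sqrt_mult)
    finally have "sqrt ((norm d)^2 + (norm d)^2) = sqrt 2 * norm d" .
    moreover have "sqrt 2 \<le> (69/20::real)"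
      by (rule real_le_lsqrt) (auto simp: power2_eq_square)
    moreover have "sqrt 2 * norm d \<le> 69/20 * norm d"
      using \<open>sqrt 2 \<le> _\<close> by (rule mult_right_mono) simp
    ultimately have "sqrt ((norm d)^2 + (norm d)^2) \<le> 69/20 * norm d"
      by simp
    then show ?thesis using y0 x0 by (simp add: Gf_def)
  next
    case False
    have "0 \<le> (norm x)^2 + y^2" by simp
    then have pos: "0 < (norm x)^2 + y^2" using False by linarith
    have ip: "\<bar>inner x d\<bar> \<le> norm x * norm d" by (rule Cauchy_Schwarz_ineq2)
    have G: "inner (Gf x y) d = inner x d / sqrt (y^2 + (norm x)^2)"
      unfolding Gf_def by (simp add: divide_inverse_commute)
    have "sqrt ((y^2+(norm d)^2) + ((norm x)^2 + 2*inner x d + (norm d)^2)) - 69/20 * sqrt (y^2+(norm d)^2)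
         \<le> sqrt (y^2+(norm x)^2) - 69/20*y + inner x d / sqrt (y^2+(norm x)^2)"
      by (rule scalar_step[OF norm_ge_zero y norm_ge_zero ip pos])
    then show ?thesis unfolding s2 nxd G .
  qed
qed



lemma nth_meas[measurable]: "(\<lambda>x::'b::real_normed_vector^'n. x $ i) \<in> borel_measurable borel"
  by (intro borel_measurable_continuous_onI linear_continuous_on bounded_linear_vec_nth)

lemma filt_space: "space (nat_filtration M W k) = space M"
  unfolding nat_filtration_def by (simp add: space_measure_of_conv)

lemma filt_sets: "sets (nat_filtration M W k) =
   sigma_sets (space M) (\<Union>s\<in>{1..k}. {W s -` A \<inter> space M | A. A \<in> sets borel})"
  unfolding nat_filtration_def by (rule sets_measure_of) auto

lemma filt_meas:
  assumes "s \<in> {1..k}"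
  shows "W s \<in> borel_measurable (nat_filtration M W k)"
proof (rule measurableI)
  fix A :: "'b set" assume A: "A \<in> sets borel"
  have "W s -` A \<inter> space M \<in> (\<Union>s\<in>{1..k}. {W s -` A \<inter> space M | A. A \<in> sets borel})"
    using assms A by blast
  then show "W s -` A \<inter> space (nat_filtration M W k) \<in> sets (nat_filtration M W k)"
    unfolding filt_space filt_sets by (rule sigma_sets.Basic)
qed simp

lemma filt_sub:
  assumes "\<And>s. s \<in> {1..k} \<Longrightarrow> W s \<in> borel_measurable M"
  shows "subalgebra M (nat_filtration M W k)"
  unfolding subalgebra_def filt_space filt_sets
proof (intro conjI refl sets.sigma_sets_subset)
  show "(\<Union>s\<in>{1..k}. {W s -` A \<inter> space M | A. A \<in> sets borel}) \<subseteq> sets M"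
    using assms by (auto intro: measurable_sets)
qed

lemma filt_sfs:
  assumes "prob_space M" "\<And>s. s \<in> {1..k} \<Longrightarrow> W s \<in> borel_measurable M"
  shows "sigma_finite_subalgebra M (nat_filtration M W k)"
proof (rule finite_measure_subalgebra_is_sigma_finite)
  show "finite_measure_subalgebra M (nat_filtration M W k)"
    unfolding finite_measure_subalgebra_def finite_measure_subalgebra_axioms_def
    using assms filt_sub[of k W M] by (auto simp: prob_space_def)
qed

lemma inner_vv: "inner (a::real^'n^'m) b = (\<Sum>i\<in>UNIV. \<Sum>j\<in>UNIV. a$i$j * b$i$j)"
  by (simp add: inner_vec_def)

lemma mds_zero:
  fixes W :: "nat \<Rightarrow> 'a \<Rightarrow> real^'n^'m" and g :: "'a \<Rightarrow> real^'n^'m"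
  assumes ps: "prob_space M" and t: "1 \<le> t"
    and meas: "\<And>s. s \<in> {1..t} \<Longrightarrow> W s \<in> borel_measurable M"
    and intW: "integrable M (\<lambda>\<omega>. norm (W t \<omega>))"
    and mds: "\<And>i j. AE \<omega> in M. real_cond_exp M (nat_filtration M W (t - 1)) (\<lambda>x. W t x $ i $ j) \<omega> = 0"
    and g: "g \<in> borel_measurable (nat_filtration M W (t-1))"
    and gb: "\<And>\<omega>. norm (g \<omega>) \<le> 1"
  shows "integrable M (\<lambda>\<omega>. inner (g \<omega>) (W t \<omega>))" "(\<integral>\<omega>. inner (g \<omega>) (W t \<omega>) \<partial>M) = 0"
proof -
  define F where "F = nat_filtration M W (t-1)"
  interpret sigma_finite_subalgebra M F
    unfolding F_def by (rule filt_sfs[OF ps]) (use meas in auto)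
  have Wm[measurable]: "W t \<in> borel_measurable M" using meas t by auto
  have gF[measurable]: "g \<in> borel_measurable F" using g unfolding F_def .
  have gM[measurable]: "g \<in> borel_measurable M" by (rule measurable_from_subalg[OF subalg gF])
  have intij: "integrable M (\<lambda>\<omega>. g \<omega> $ i $ j * W t \<omega> $ i $ j)" for i j
  proof (rule Bochner_Integration.integrable_bound[OF intW])
    show "(\<lambda>\<omega>. g \<omega> $ i $ j * W t \<omega> $ i $ j) \<in> borel_measurable M" by measurable
    show "AE \<omega> in M. norm (g \<omega> $ i $ j * W t \<omega> $ i $ j) \<le> norm (norm (W t \<omega>))"
    proof (intro AE_I2)
      fix \<omega>
      have a: "\<bar>g \<omega> $ i $ j\<bar> \<le> 1"
        using component_le_norm_cart[of "g \<omega> $ i" j] Finite_Cartesian_Product.norm_nth_le[of "g \<omega>" i] gb[of \<omega>] by simp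
      have b: "\<bar>W t \<omega> $ i $ j\<bar> \<le> norm (W t \<omega>)"
        using component_le_norm_cart[of "W t \<omega> $ i" j] Finite_Cartesian_Product.norm_nth_le[of "W t \<omega>" i] by simp
      have "\<bar>g \<omega> $ i $ j\<bar> * \<bar>W t \<omega> $ i $ j\<bar> \<le> 1 * norm (W t \<omega>)"
        using a b by (intro mult_mono) auto
      then show "norm (g \<omega> $ i $ j * W t \<omega> $ i $ j) \<le> norm (norm (W t \<omega>))"
        by (simp add: abs_mult)
    qed
  qed
  have zij: "(\<integral>\<omega>. g \<omega> $ i $ j * W t \<omega> $ i $ j \<partial>M) = 0" for i j
  proof -
    have "(\<integral>\<omega>. g \<omega> $ i $ j * W t \<omega> $ i $ j \<partial>M)
          = (\<integral>\<omega>. g \<omega> $ i $ j * real_cond_exp M F (\<lambda>x. W t x $ i $ j) \<omega> \<partial>M)"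
      by (rule real_cond_exp_intg(2)[symmetric]) (use intij in auto)
    also have "\<dots> = 0"
      by (rule integral_eq_zero_AE) (use mds[of i j] in \<open>auto simp: F_def\<close>)
    finally show ?thesis .
  qed
  have eq: "(\<lambda>\<omega>. inner (g \<omega>) (W t \<omega>)) = (\<lambda>\<omega>. \<Sum>i\<in>UNIV. \<Sum>j\<in>UNIV. g \<omega> $ i $ j * W t \<omega> $ i $ j)"
    by (simp add: inner_vv)
  show "integrable M (\<lambda>\<omega>. inner (g \<omega>) (W t \<omega>))"
    unfolding eq using intij by auto
  show "(\<integral>\<omega>. inner (g \<omega>) (W t \<omega>) \<partial>M) = 0"
    unfolding eq using intij zij by (simp add: integral_sum)
qed



lemma le_one_plus_powr:
  assumes x: "0 \<le> (x::real)" and p: "1 \<le> p" shows "x \<le> 1 + x powr p"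
proof (cases "x \<le> 1")
  case True
  then show ?thesis using powr_ge_zero[of x p] by linarith
next
  case False
  then have "x powr 1 \<le> x powr p" using p by (intro powr_mono) auto
  then show ?thesis using x powr_ge_zero[of x p] by (simp add: powr_one)
qed

lemma meas_SYG:
  fixes W :: "nat \<Rightarrow> 'a \<Rightarrow> real^'n^'m"
  assumes m: "\<And>s. s \<in> {1..k} \<Longrightarrow> W s \<in> borel_measurable N"
  shows "(\<lambda>\<omega>. \<Sum>t=1..k. W t \<omega>) \<in> borel_measurable N"
    and "(\<lambda>\<omega>. sqrt (\<Sum>t=1..k. (norm (W t \<omega>))^2)) \<in> borel_measurable N"
    and "(\<lambda>\<omega>. Gf (\<Sum>t=1..k. W t \<omega>) (sqrt (\<Sum>t=1..k. (norm (W t \<omega>))^2))) \<in> borel_measurable N"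
proof -
  show 1[measurable]: "(\<lambda>\<omega>. \<Sum>t=1..k. W t \<omega>) \<in> borel_measurable N"
    by (rule borel_measurable_sum) (rule m)
  have 2[measurable]: "(\<lambda>\<omega>. \<Sum>t=1..k. (norm (W t \<omega>))^2) \<in> borel_measurable N"
  proof (rule borel_measurable_sum)
    fix t assume "t \<in> {1..k}"
    then have [measurable]: "W t \<in> borel_measurable N" by (rule m)
    show "(\<lambda>\<omega>. (norm (W t \<omega>))^2) \<in> borel_measurable N" by measurable
  qed
  show "(\<lambda>\<omega>. sqrt (\<Sum>t=1..k. (norm (W t \<omega>))^2)) \<in> borel_measurable N" by measurable
  show "(\<lambda>\<omega>. Gf (\<Sum>t=1..k. W t \<omega>) (sqrt (\<Sum>t=1..k. (norm (W t \<omega>))^2))) \<in> borel_measurable N"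
    unfolding Gf_def by measurable
qed

theorem mainTheorem8:
  fixes M :: "'a measure" and W :: "nat \<Rightarrow> 'a \<Rightarrow> real ^ 'n ^ 'm"
    and p :: real and T :: nat
  assumes "prob_space M"
    and "1 < p" and "p \<le> 2" and "1 \<le> T"
    and meas: "\<And>t. t \<in> {1..T} \<Longrightarrow> W t \<in> borel_measurable M"
    and mom: "\<And>t. t \<in> {1..T} \<Longrightarrow> integrable M (\<lambda>\<omega>. frob_norm (W t \<omega>) powr p)"
    and mds: "\<And>t i j. t \<in> {1..T} \<Longrightarrow>
       AE \<omega> in M. real_cond_exp M (nat_filtration M W (t - 1)) (\<lambda>x. W t x $ i $ j) \<omega> = 0"
  shows "(\<integral>\<omega>. frob_norm (\<Sum>t=1..T. W t \<omega>) \<partial>M)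
         \<le> 2 * sqrt pi * (\<integral>\<omega>. (\<Sum>t=1..T. frob_norm (W t \<omega>) powr p) powr (1 / p) \<partial>M)"
proof -
  note ps = assms(1)
  interpret prob_space M by (rule ps)
  define S where "S k \<omega> = (\<Sum>t=1..k. W t \<omega>)" for k \<omega>
  define Y where "Y k \<omega> = sqrt (\<Sum>t=1..k. (norm (W t \<omega>))^2)" for k \<omega>
  define I where "I t \<omega> = inner (Gf (S (t-1) \<omega>) (Y (t-1) \<omega>)) (W t \<omega>)" for t \<omega>
  define U where "U k \<omega> = sqrt ((Y k \<omega>)^2 + (norm (S k \<omega>))^2) - 69/20 * Y k \<omega>" for k \<omega>
  define P where "P \<omega> = (\<Sum>t=1..T. norm (W t \<omega>) powr p) powr (1 / p)" for \<omega>
  have Ynn: "0 \<le> Y k \<omega>" for k \<omega> unfolding Y_def by (simp add: sum_nonneg)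
  have Ysuc: "Y (Suc k) \<omega> = sqrt ((Y k \<omega>)^2 + (norm (W (Suc k) \<omega>))^2)" for k \<omega>
    unfolding Y_def by (simp add: sum_nonneg)
  have Ssuc: "S (Suc k) \<omega> = S k \<omega> + W (Suc k) \<omega>" for k \<omega>
    unfolding S_def by simp
  have key: "U k \<omega> \<le> (\<Sum>t=1..k. I t \<omega>)" for k \<omega>
  proof (induction k)
    case 0
    then show ?case by (simp add: U_def Y_def S_def)
  next
    case (Suc k)
    have "U (Suc k) \<omega> \<le> U k \<omega> + I (Suc k) \<omega>"
      using vec_step[OF Ynn[of k \<omega>], where x="S k \<omega>" and d="W (Suc k) \<omega>"]
      unfolding U_def Ysuc Ssuc I_def by simp
    then show ?case using Suc.IH by simp
  qed
  have bound: "norm (S T \<omega>) \<le> 69/20 * Y T \<omega> + (\<Sum>t=1..T. I t \<omega>)" for \<omega>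
  proof -
    have "norm (S T \<omega>) \<le> sqrt ((Y T \<omega>)^2 + (norm (S T \<omega>))^2)" by (rule real_le_rsqrt) simp
    then show ?thesis using key[of T \<omega>] unfolding U_def by linarith
  qed
  have intN: "integrable M (\<lambda>\<omega>. norm (W t \<omega>))" if t: "t \<in> {1..T}" for t
  proof (rule Bochner_Integration.integrable_bound)
    show "integrable M (\<lambda>\<omega>. 1 + frob_norm (W t \<omega>) powr p)" using mom[OF t] by simp
    show "(\<lambda>\<omega>. norm (W t \<omega>)) \<in> borel_measurable M" using meas[OF t] by measurable
    show "AE \<omega> in M. norm (norm (W t \<omega>)) \<le> norm (1 + frob_norm (W t \<omega>) powr p)"
      using le_one_plus_powr[of "norm (W t _)" p] \<open>1 < p\<close> by (simp add: frob_norm_eq)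
  qed
  have intSum: "integrable M (\<lambda>\<omega>. \<Sum>t=1..T. norm (W t \<omega>))" using intN by auto
  have intI: "integrable M (I t)" and zeroI: "(\<integral>\<omega>. I t \<omega> \<partial>M) = 0" if t: "t \<in> {1..T}" for t
  proof -
    have gm: "(\<lambda>\<omega>. Gf (S (t-1) \<omega>) (Y (t-1) \<omega>)) \<in> borel_measurable (nat_filtration M W (t-1))"
      unfolding S_def Y_def by (rule meas_SYG(3)) (rule filt_meas)
    have "integrable M (\<lambda>\<omega>. inner (Gf (S (t-1) \<omega>) (Y (t-1) \<omega>)) (W t \<omega>))"
         "(\<integral>\<omega>. inner (Gf (S (t-1) \<omega>) (Y (t-1) \<omega>)) (W t \<omega>) \<partial>M) = 0"
      by (rule mds_zero[OF ps _ _ intN[OF t] mds[OF t] gm norm_Gf]; use t meas in auto)+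
    then show "integrable M (I t)" "(\<integral>\<omega>. I t \<omega> \<partial>M) = 0" unfolding I_def by auto
  qed
  have SM: "(\<lambda>\<omega>. S T \<omega>) \<in> borel_measurable M" and YM: "(\<lambda>\<omega>. Y T \<omega>) \<in> borel_measurable M"
    unfolding S_def Y_def by (rule meas_SYG; rule meas; simp)+
  have YP: "Y T \<omega> \<le> P \<omega>" for \<omega>
  proof -
    have "(\<Sum>t=1..T. norm (W t \<omega>) powr 2) powr (1/2) \<le> (\<Sum>t=1..T. norm (W t \<omega>) powr p) powr (1/p)"
      using \<open>1 < p\<close> \<open>p \<le> 2\<close> by (intro lp_mono) auto
    then show ?thesis unfolding Y_def P_def by (simp add: powr_half_sqrt sum_nonneg)
  qed
  have PS: "P \<omega> \<le> (\<Sum>t=1..T. norm (W t \<omega>))" for \<omega>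
  proof -
    have "(\<Sum>t=1..T. norm (W t \<omega>) powr p) powr (1/p) \<le> (\<Sum>t=1..T. norm (W t \<omega>) powr 1) powr (1/1)"
      using \<open>1 < p\<close> by (intro lp_mono) auto
    then show ?thesis unfolding P_def by (simp add: sum_nonneg)
  qed
  have PM: "P \<in> borel_measurable M"
  proof -
    have "(\<lambda>\<omega>. \<Sum>t=1..T. norm (W t \<omega>) powr p) \<in> borel_measurable M"
    proof (rule borel_measurable_sum)
      fix t assume "t \<in> {1..T}"
      then have [measurable]: "W t \<in> borel_measurable M" by (rule meas)
      show "(\<lambda>\<omega>. norm (W t \<omega>) powr p) \<in> borel_measurable M" by measurable
    qed
    then show ?thesis unfolding P_def by measurable
  qed
  have intP: "integrable M P"
    by (rule Bochner_Integration.integrable_bound[OF intSum PM])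
       (use PS in \<open>auto intro!: AE_I2 simp: P_def sum_nonneg\<close>)
  have intY: "integrable M (\<lambda>\<omega>. Y T \<omega>)"
    by (rule Bochner_Integration.integrable_bound[OF intP YM])
       (use YP Ynn in \<open>auto intro!: AE_I2 simp: P_def\<close>)
  have intS: "integrable M (\<lambda>\<omega>. norm (S T \<omega>))"
    by (rule Bochner_Integration.integrable_bound[OF intSum])
       (use SM in \<open>auto intro!: AE_I2 norm_sum simp: S_def sum_nonneg\<close>)
  have intR: "integrable M (\<lambda>\<omega>. 69/20 * Y T \<omega> + (\<Sum>t=1..T. I t \<omega>))"
    by (intro Bochner_Integration.integrable_add Bochner_Integration.integrable_mult_right Bochner_Integration.integrable_sum)
       (use intY intI in auto)
  have "(\<integral>\<omega>. norm (S T \<omega>) \<partial>M) \<le> (\<integral>\<omega>. 69/20 * Y T \<omega> + (\<Sum>t=1..T. I t \<omega>) \<partial>M)"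
    by (rule integral_mono[OF intS intR bound])
  also have "\<dots> = 69/20 * (\<integral>\<omega>. Y T \<omega> \<partial>M) + (\<Sum>t=1..T. \<integral>\<omega>. I t \<omega> \<partial>M)"
  proof -
    have iS: "integrable M (\<lambda>\<omega>. \<Sum>t=1..T. I t \<omega>)"
      by (intro Bochner_Integration.integrable_sum) (use intI in auto)
    have iY: "integrable M (\<lambda>\<omega>. 69/20 * Y T \<omega>)"
      by (intro Bochner_Integration.integrable_mult_right) (use intY in auto)
    have "(\<integral>\<omega>. 69/20 * Y T \<omega> + (\<Sum>t=1..T. I t \<omega>) \<partial>M)
        = (\<integral>\<omega>. 69/20 * Y T \<omega> \<partial>M) + (\<integral>\<omega>. (\<Sum>t=1..T. I t \<omega>) \<partial>M)"
      by (rule Bochner_Integration.integral_add[OF iY iS])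
    also have "(\<integral>\<omega>. (\<Sum>t=1..T. I t \<omega>) \<partial>M) = (\<Sum>t=1..T. \<integral>\<omega>. I t \<omega> \<partial>M)"
      by (rule Bochner_Integration.integral_sum) (use intI in auto)
    finally show ?thesis by simp
  qed
  also have "\<dots> = 69/20 * (\<integral>\<omega>. Y T \<omega> \<partial>M)" using zeroI by simp
  also have "\<dots> \<le> 69/20 * (\<integral>\<omega>. P \<omega> \<partial>M)"
    using integral_mono[OF intY intP YP] by simp
  also have "\<dots> \<le> 2 * sqrt pi * (\<integral>\<omega>. P \<omega> \<partial>M)"
    by (rule mult_right_mono[OF const_le]) (simp add: P_def)
  finally show ?thesis unfolding S_def P_def frob_norm_eq .
qed

end
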